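(* Let $\mathbf y_b\in\mathbb R^{n_b}$, $\mathbf X_b\in\mathbb R^{n_b\times m}$, $\mathbf V_b\in\mathbb R^{n_b\times n_b}$ symmetric positive definite, and $\mathbf A\in\mathbb R^{n\times n_b}$ of full column rank. Set $\mathbf y=\mathbf A\mathbf y_b$, $\mathbf X=\mathbf A\mathbf X_b$, $\mathbf V=\mathbf A\mathbf V_b\mathbf A^\top$, and define the projection-induced mappings $$\mathbf P_b=(\mathbf X_b^\top\mathbf V_b^{-1}\mathbf X_b)^{+}\mathbf X_b^\top\mathbf V_b^{-1}\in\mathbb R^{m\times n_b},\qquad \mathbf P=(\mathbf X^\top\mathbf V^{+}\mathbf X)^{+}\mathbf X^\top\mathbf V^{+}\in\mathbb R^{m\times n}.$$ Then $\mathbf P\mathbf A=\mathbf P_b$. In particular, for every row index $i$, writing $\mathbf p_i^\top$ and $\mathbf p_{b,i}^\top$ for the $i$-th rows of $\mathbf P$ and $\mathbf P_b$, one has $\mathbf p_{b,i}^\top=\mathbf p_i^\top\mathbf A$ and $\mathbf p_i^\top\mathbf y=\mathbf p_{b,i}^\top\mathbf y_b$. Moreover, if $\mathbf y_b=(\mathbf y_{b,1}^\top,\dots,\mathbf y_{b,K}^\top)^\top$ is partitioned into $K$ study blocks, $\mathbf V_b$ is block diagonal with respect to this partition, and $\mathbf A=\operatorname{diag}(\mathbf A_1,\dots,\mathbf A_K)$ is block diagonal with each $\mathbf A_k$ of full column rank, then for each study $k$ the corresponding blocks satisfy $\mathbf p_{b,i,k}^\top=\mathbf p_{i,k}^\top\mathbf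 A_k$ and $\mathbf p_{i,k}^\top\mathbf A_k\mathbf y_{b,k}=\mathbf p_{b,i,k}^\top\mathbf y_{b,k}$, i.e. each study-level contribution to the estimator is the same in both representations.
   Context: Notation as in network meta-analysis with observed contrasts $\mathbf y$, design matrix $\mathbf X$ and covariance $\mathbf V$; the GLS (network meta-analysis) estimator is $\hat{\boldsymbol\theta}=\mathbf P\mathbf y$ with $\mathbf P=(\mathbf X^\top\mathbf V^{+}\mathbf X)^{+}\mathbf X^\top\mathbf V^{+}$, where $^{+}$ denotes the Moore–Penrose pseudoinverse. The study-level contribution of study $k$ to the $i$-th estimated contrast is $\mathbf p_{i,k}^\top\mathbf y_k$, where $\mathbf p_{i,k}$ and $\mathbf y_k$ are the blocks of the $i$-th row of $\mathbf P$ and of $\mathbf y$ belonging to study $k$. The reduced representation $(\mathbf y_b,\mathbf X_b,\mathbf V_b)$ and the full representation $(\mathbf y,\mathbf X,\mathbf V)$ are related by the linear embedding $\mathbf A$ as stated. *)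

theory Defs
  imports "Jordan_Normal_Form.DL_Rank" "Jordan_Normal_Form.DL_Submatrix"
begin

text \<open>Moore--Penrose pseudoinverse of a real matrix: the unique matrix satisfying the
  four Penrose conditions.\<close>
definition pinv :: "real mat \<Rightarrow> real mat" where
  "pinv A = (THE B. B \<in> carrier_mat (dim_col A) (dim_row A) \<and>
       A * B * A = A \<and> B * A * B = B \<and>
       transpose_mat (A * B) = A * B \<and> transpose_mat (B * A) = B * A)"

text \<open>Ordinary inverse of a square (invertible) matrix.\<close>
definition inv_mat :: "real mat \<Rightarrow> real mat" where
  "inv_mat A = (THE B. B \<in> carrier_mat (dim_row A) (dim_row A) \<and> inverts_mat A B \<and> inverts_mat B A)"

text \<open>Symmetric positive definite n x n matrix.\<close>
definition sym_pos_def :: "nat \<Rightarrow> real mat \<Rightarrow> bool" where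
  "sym_pos_def n V \<longleftrightarrow> V \<in> carrier_mat n n \<and> transpose_mat V = V \<and>
     (\<forall>v \<in> carrier_vec n. v \<noteq> 0\<^sub>v n \<longrightarrow> v \<bullet> (V *\<^sub>v v) > 0)"

text \<open>Full column rank: the rank equals the number of columns.\<close>
definition full_col_rank :: "real mat \<Rightarrow> bool" where
  "full_col_rank A \<longleftrightarrow> vec_space.rank (dim_row A) A = dim_col A"

text \<open>The block of entries with indices in [a, b) of a vector.\<close>
definition subvec :: "'a vec \<Rightarrow> nat \<Rightarrow> nat \<Rightarrow> 'a vec" where
  "subvec v a b = vec (b - a) (\<lambda>j. v $ (a + j))"

end

theory Submission
  imports Defs
begin
lemma assoc_any[simp]:
  fixes Q B C :: "'a::comm_semiring_0 mat"
  assumes "dim_col B = dim_row C"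
  shows "Q * B * C = Q * (B * C)"
proof (rule eq_matI)
  fix i j assume i: "i < dim_row (Q * (B * C))" and j: "j < dim_col (Q * (B * C))"
  have "(Q * B * C) $$ (i, j) = (\<Sum>k<dim_row C. (\<Sum>l<dim_row B. row Q i $ l * B $$ (l, k)) * C $$ (k, j))"
    using i j assms by (simp add: scalar_prod_def atLeast0LessThan)
  also have "\<dots> = (\<Sum>l<dim_row B. row Q i $ l * (\<Sum>k<dim_row C. B $$ (l, k) * C $$ (k, j)))"
    by (simp add: sum_distrib_left sum_distrib_right mult.assoc sum.swap[of _ "{..<dim_row C}"])
  also have "\<dots> = (Q * (B * C)) $$ (i, j)"
    using i j assms by (simp add: scalar_prod_def atLeast0LessThan)
  finally show "(Q * B * C) $$ (i, j) = (Q * (B * C)) $$ (i, j)" .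
qed auto

lemma transpose_mult':
  fixes A B :: "'a::comm_semiring_0 mat"
  assumes "dim_col A = dim_row B"
  shows "transpose_mat (A * B) = transpose_mat B * transpose_mat A"
  using transpose_mult[of A "dim_row A" "dim_col A" B "dim_col B"] assms
  by (metis carrier_matI)

lemma inv_exists:
  fixes M :: "real mat"
  assumes M: "M \<in> carrier_mat k k"
    and inj: "\<And>v. v \<in> carrier_vec k \<Longrightarrow> M *\<^sub>v v = 0\<^sub>v k \<Longrightarrow> v = 0\<^sub>v k"
  shows "\<exists>Mi. Mi \<in> carrier_mat k k \<and> M * Mi = 1\<^sub>m k \<and> Mi * M = 1\<^sub>m k"
proof -
  have "det M \<noteq> 0" using det_0_iff_vec_prod_zero_field[OF M] inj by blast
  from det_non_zero_imp_unit[OF M this, of "()"]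
  show ?thesis unfolding Units_def ring_mat_def by auto
qed

lemma inv_sym:
  fixes M Mi :: "real mat"
  assumes M: "M \<in> carrier_mat k k" and Mi: "Mi \<in> carrier_mat k k"
    and s: "transpose_mat M = M" and l: "M * Mi = 1\<^sub>m k" and r: "Mi * M = 1\<^sub>m k"
  shows "transpose_mat Mi = Mi"
proof -
  have "transpose_mat Mi * M = 1\<^sub>m k"
    using transpose_mult'[of M Mi] M Mi s l by simp
  hence "transpose_mat Mi * M * Mi = Mi" using Mi by simp
  thus ?thesis using l M Mi by simp
qed

lemma sq_zero:
  fixes v :: "real vec"
  assumes "v \<bullet> v = 0"
  shows "v = 0\<^sub>v (dim_vec v)"
proof -
  have "(\<Sum>i\<in>{0..<dim_vec v}. v $ i * v $ i) = 0" using assms by (simp add: scalar_prod_def)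
  hence "\<forall>i\<in>{0..<dim_vec v}. v $ i * v $ i = 0"
    by (subst sum_nonneg_eq_0_iff[symmetric]) auto
  thus ?thesis by (intro eq_vecI) auto
qed

lemma spd_inj:
  assumes "sym_pos_def k V" "v \<in> carrier_vec k" "V *\<^sub>v v = 0\<^sub>v k"
  shows "v = 0\<^sub>v k"
  using assms unfolding sym_pos_def_def by force

lemma fcr_inj:
  fixes A :: "real mat"
  assumes A: "A \<in> carrier_mat n nc" and r: "full_col_rank A"
    and v: "v \<in> carrier_vec nc" and Av: "A *\<^sub>v v = 0\<^sub>v n"
  shows "v = 0\<^sub>v nc"
proof (rule ccontr)
  assume nz: "v \<noteq> 0\<^sub>v nc"
  interpret vs: vec_space "TYPE(real)" n .
  have rk: "vs.rank A = nc" using r A unfolding full_col_rank_def by auto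
  show False
  proof (cases "distinct (cols A)")
    case True
    have "vs.lin_indpt (set (cols A))" using vs.full_rank_lin_indpt[OF A rk True] .
    moreover have "vs.lin_dep (set (cols A))" using vs.lin_depI[OF A v nz Av True] .
    ultimately show False by simp
  next
    case False
    obtain S where S: "maximal S (\<lambda>T. T \<subseteq> set (cols A) \<and> vs.lin_indpt T)"
      using maximal_exists[of "(\<lambda>T. T \<subseteq> set (cols A) \<and> vs.lin_indpt T)" "card (set (cols A))" "{}"]
      by (meson List.finite_set card_mono empty_iff empty_subsetI vs.finite_lin_indpt2 rev_finite_subset)
    then have "card S \<le> card (set (cols A))" by (simp add: card_mono maximal_def)
    moreover have "card (set (cols A)) < nc"
      using False A by (metis card_distinct card_length cols_length carrier_matD(2) nat_less_le)
    ultimately have "card S < nc" by simp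
    then show False using vs.rank_card_indpt[OF A S] rk by simp
  qed
qed


definition penrose :: "real mat \<Rightarrow> real mat \<Rightarrow> bool" where
  "penrose A B \<longleftrightarrow> B \<in> carrier_mat (dim_col A) (dim_row A) \<and>
       A * B * A = A \<and> B * A * B = B \<and>
       transpose_mat (A * B) = A * B \<and> transpose_mat (B * A) = B * A"

lemma penrose_unique:
  assumes pB: "penrose A B" and pC: "penrose A C"
  shows "B = C"
proof -
  obtain r c where A: "A \<in> carrier_mat r c" by blast
  have B: "B \<in> carrier_mat c r" and C: "C \<in> carrier_mat c r" using pB pC A unfolding penrose_def by auto
  note facts = pB[unfolded penrose_def] pC[unfolded penrose_def]
  have ABA: "A * B * A = A" and TAB: "transpose_mat (A * B) = A * B"
    and TBA: "transpose_mat (B * A) = B * A" using facts by blast+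
  have AT1: "transpose_mat A = transpose_mat A * (A * C)"
  proof -
    have "transpose_mat A = transpose_mat (A * C * A)" using facts by simp
    also have "\<dots> = transpose_mat A * transpose_mat (A * C)"
      using A C by (subst transpose_mult') auto
    finally show ?thesis using facts by simp
  qed
  have AT2: "transpose_mat A = (C * A) * transpose_mat A"
  proof -
    have "transpose_mat A = transpose_mat (A * (C * A))" using facts A C by simp
    also have "\<dots> = transpose_mat (C * A) * transpose_mat A"
      using A C by (subst transpose_mult') auto
    finally show ?thesis using facts by simp
  qed
  have ABAC: "A * B = A * C"
  proof -
    have "A * B = transpose_mat B * transpose_mat A" using facts A B transpose_mult'[of A B] by simp
    also have "\<dots> = transpose_mat B * (transpose_mat A * (A * C))" using AT1 by simp
    also have "\<dots> = transpose_mat (A * B) * (A * C)" using A B C by (simp add: transpose_mult')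
    also have "\<dots> = A * B * A * C" using A B C by (simp add: TAB)
    also have "\<dots> = A * C" by (simp only: ABA)
    finally show ?thesis .
  qed
  have BACA: "B * A = C * A"
  proof -
    have "B * A = transpose_mat A * transpose_mat B" using facts A B transpose_mult'[of B A] by simp
    also have "\<dots> = (C * A) * transpose_mat A * transpose_mat B" using AT2 by simp
    also have "\<dots> = (C * A) * transpose_mat (B * A)" using A B C by (simp add: transpose_mult')
    also have "\<dots> = C * (A * B * A)" using A B C by (simp add: TBA)
    also have "\<dots> = C * A" by (simp only: ABA)
    finally show ?thesis .
  qed
  have "B = B * A * B" using facts by simp
  also have "\<dots> = B * (A * C)" using ABAC A B by simp
  also have "\<dots> = C * A * C" using BACA A B C by (metis assoc_any carrier_matD(1) carrier_matD(2))
  also have "\<dots> = C" using facts by simp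
  finally show ?thesis .
qed

lemma pinv_eq:
  assumes "penrose A B"
  shows "pinv A = B"
  unfolding pinv_def
  apply (rule the_equality)
  using assms apply (simp add: penrose_def)
  using penrose_unique[OF _ assms] by (simp add: penrose_def)


lemma mv_sum:
  "j < dim_row M \<Longrightarrow> dim_vec y = dim_col M \<Longrightarrow> (M *\<^sub>v y) $ j = (\<Sum>l<dim_col M. M $$ (j, l) * y $ l)"
  by (simp add: scalar_prod_def atLeast0LessThan)

lemma mm_sum:
  "i < dim_row M \<Longrightarrow> j < dim_col N \<Longrightarrow> dim_col M = dim_row N \<Longrightarrow>
   (M * N) $$ (i, j) = (\<Sum>l<dim_col M. M $$ (i, l) * N $$ (l, j))"
  by (simp add: scalar_prod_def atLeast0LessThan)

lemma carrier_vec_0: "v \<in> carrier_vec 0 \<Longrightarrow> v = 0\<^sub>v 0"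
  by (intro eq_vecI) auto

lemma factor_step:
  fixes A :: "real mat"
  assumes A: "A \<in> carrier_mat r c0" and c: "c < c0"
    and F: "F \<in> carrier_mat r k" and G: "G \<in> carrier_mat k c"
    and FG: "mat r c (\<lambda>(i,j). A $$ (i,j)) = F * G"
    and Finj: "\<forall>v\<in>carrier_vec k. F *\<^sub>v v = 0\<^sub>v r \<longrightarrow> v = 0\<^sub>v k"
    and Ginj: "\<forall>v\<in>carrier_vec k. transpose_mat G *\<^sub>v v = 0\<^sub>v c \<longrightarrow> v = 0\<^sub>v k"
  shows "\<exists>k F G. F \<in> carrier_mat r k \<and> G \<in> carrier_mat k (Suc c) \<and>
      mat r (Suc c) (\<lambda>(i,j). A $$ (i,j)) = F * G \<and>
      (\<forall>v\<in>carrier_vec k. F *\<^sub>v v = 0\<^sub>v r \<longrightarrow> v = 0\<^sub>v k) \<and>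
      (\<forall>v\<in>carrier_vec k. transpose_mat G *\<^sub>v v = 0\<^sub>v (Suc c) \<longrightarrow> v = 0\<^sub>v k)"
proof -
  have FGe: "A $$ (i, j) = (\<Sum>l<k. F $$ (i, l) * G $$ (l, j))" if "i < r" "j < c" for i j
  proof -
    have "mat r c (\<lambda>(i,j). A $$ (i,j)) $$ (i, j) = (F * G) $$ (i, j)" using FG by simp
    thus ?thesis using that F G by (simp add: mm_sum scalar_prod_def atLeast0LessThan)
  qed
  show ?thesis
  proof (cases "\<exists>w\<in>carrier_vec k. F *\<^sub>v w = vec r (\<lambda>i. A $$ (i, c))")
    case True
    then obtain w where w: "w \<in> carrier_vec k" and Fw: "F *\<^sub>v w = vec r (\<lambda>i. A $$ (i, c))" by blast
    have Fwe: "(\<Sum>l<k. F $$ (i, l) * w $ l) = A $$ (i, c)" if "i < r" for i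
    proof -
      have "(F *\<^sub>v w) $ i = A $$ (i, c)" using Fw that by simp
      thus ?thesis using that F w by (simp add: mv_sum scalar_prod_def atLeast0LessThan)
    qed
    define G' where "G' = mat k (Suc c) (\<lambda>(i,j). if j < c then G $$ (i,j) else w $ i)"
    have G': "G' \<in> carrier_mat k (Suc c)" unfolding G'_def by simp
    have eq: "mat r (Suc c) (\<lambda>(i,j). A $$ (i,j)) = F * G'"
    proof (rule eq_matI)
      fix i j assume i: "i < dim_row (F * G')" and j: "j < dim_col (F * G')"
      hence i: "i < r" and j: "j < Suc c" using F G' by auto
      show "mat r (Suc c) (\<lambda>(i,j). A $$ (i,j)) $$ (i, j) = (F * G') $$ (i, j)"
        using i j F G' FGe[OF i] Fwe[OF i] by (auto simp: mm_sum scalar_prod_def atLeast0LessThan G'_def less_Suc_eq)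
    qed (use F G' in auto)
    have inj: "\<forall>v\<in>carrier_vec k. transpose_mat G' *\<^sub>v v = 0\<^sub>v (Suc c) \<longrightarrow> v = 0\<^sub>v k"
    proof (intro ballI impI)
      fix v assume v: "v \<in> carrier_vec k" and z: "transpose_mat G' *\<^sub>v v = 0\<^sub>v (Suc c)"
      have "transpose_mat G *\<^sub>v v = 0\<^sub>v c"
      proof (rule eq_vecI)
        fix j assume "j < dim_vec (0\<^sub>v c :: real vec)"
        hence j: "j < c" by simp
        have "(transpose_mat G' *\<^sub>v v) $ j = 0" using z j by simp
        thus "(transpose_mat G *\<^sub>v v) $ j = 0\<^sub>v c $ j"
          using j v G G' by (simp add: mv_sum scalar_prod_def atLeast0LessThan G'_def)
      qed (use G in simp)
      thus "v = 0\<^sub>v k" using Ginj v by blast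
    qed
    show ?thesis using F G' eq Finj inj by blast
  next
    case False
    define F' where "F' = mat r (Suc k) (\<lambda>(i,j). if j < k then F $$ (i,j) else A $$ (i, c))"
    define G' where "G' = mat (Suc k) (Suc c) (\<lambda>(i,j). if i < k \<and> j < c then G $$ (i,j)
                               else if i = k \<and> j = c then 1 else 0)"
    have F': "F' \<in> carrier_mat r (Suc k)" unfolding F'_def by simp
    have G': "G' \<in> carrier_mat (Suc k) (Suc c)" unfolding G'_def by simp
    have eq: "mat r (Suc c) (\<lambda>(i,j). A $$ (i,j)) = F' * G'"
    proof (rule eq_matI)
      fix i j assume i: "i < dim_row (F' * G')" and j: "j < dim_col (F' * G')"
      hence i: "i < r" and j: "j < Suc c" using F' G' by auto
      show "mat r (Suc c) (\<lambda>(i,j). A $$ (i,j)) $$ (i, j) = (F' * G') $$ (i, j)"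
        using i j F' G' FGe[OF i] by (auto simp: mm_sum scalar_prod_def atLeast0LessThan F'_def G'_def less_Suc_eq)
    qed (use F' G' in auto)
    have injF: "\<forall>v\<in>carrier_vec (Suc k). F' *\<^sub>v v = 0\<^sub>v r \<longrightarrow> v = 0\<^sub>v (Suc k)"
    proof (intro ballI impI)
      fix z assume z: "z \<in> carrier_vec (Suc k)" and Fz: "F' *\<^sub>v z = 0\<^sub>v r"
      have ze: "(\<Sum>l<k. F $$ (i, l) * z $ l) + A $$ (i, c) * z $ k = 0" if "i < r" for i
      proof -
        have "(F' *\<^sub>v z) $ i = 0" using Fz that by simp
        thus ?thesis using that F' z by (simp add: mv_sum scalar_prod_def atLeast0LessThan F'_def)
      qed
      have zk: "z $ k = 0"
      proof (rule ccontr)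
        assume t: "z $ k \<noteq> 0"
        define w where "w = vec k (\<lambda>l. - (z $ l) / z $ k)"
        have "F *\<^sub>v w = vec r (\<lambda>i. A $$ (i, c))"
        proof (rule eq_vecI)
          fix i assume "i < dim_vec (vec r (\<lambda>i. A $$ (i, c)))"
          hence i: "i < r" by simp
          have "(F *\<^sub>v w) $ i = (\<Sum>l<k. F $$ (i, l) * z $ l) * (- 1 / z $ k)"
            using i F by (simp add: mv_sum scalar_prod_def atLeast0LessThan w_def sum_distrib_right sum_divide_distrib sum_negf)
          also have "\<dots> = A $$ (i, c)" using ze[OF i] t
            by (simp add: field_simps)
          finally show "(F *\<^sub>v w) $ i = vec r (\<lambda>i. A $$ (i, c)) $ i" using i by simp
        qed (use F in simp)
        moreover have "w \<in> carrier_vec k" unfolding w_def by simp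
        ultimately show False using False by blast
      qed
      define z' where "z' = vec k (\<lambda>l. z $ l)"
      have "F *\<^sub>v z' = 0\<^sub>v r"
      proof (rule eq_vecI)
        fix i assume "i < dim_vec (0\<^sub>v r :: real vec)"
        hence i: "i < r" by simp
        show "(F *\<^sub>v z') $ i = 0\<^sub>v r $ i" using ze[OF i] zk i F by (simp add: mv_sum scalar_prod_def atLeast0LessThan z'_def)
      qed (use F in simp)
      hence "z' = 0\<^sub>v k" using Finj unfolding z'_def by simp
      show "z = 0\<^sub>v (Suc k)"
      proof (rule eq_vecI)
        fix l assume "l < dim_vec (0\<^sub>v (Suc k) :: real vec)"
        hence "l < Suc k" by simp
        thus "z $ l = 0\<^sub>v (Suc k) $ l" using zk \<open>z' = 0\<^sub>v k\<close>
          by (auto simp: less_Suc_eq z'_def dest: arg_cong[of _ _ "\<lambda>v. v $ l"])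
      qed (use z in simp)
    qed
    have injG: "\<forall>v\<in>carrier_vec (Suc k). transpose_mat G' *\<^sub>v v = 0\<^sub>v (Suc c) \<longrightarrow> v = 0\<^sub>v (Suc k)"
    proof (intro ballI impI)
      fix y assume y: "y \<in> carrier_vec (Suc k)" and Gy: "transpose_mat G' *\<^sub>v y = 0\<^sub>v (Suc c)"
      have ye: "(\<Sum>l<Suc k. G' $$ (l, j) * y $ l) = 0" if "j < Suc c" for j
      proof -
        have "(transpose_mat G' *\<^sub>v y) $ j = 0" using Gy that by simp
        thus ?thesis using that G' y by (simp add: mv_sum scalar_prod_def atLeast0LessThan)
      qed
      have yk: "y $ k = 0" using ye[of c] by (simp add: G'_def)
      define y' where "y' = vec k (\<lambda>l. y $ l)"
      have "transpose_mat G *\<^sub>v y' = 0\<^sub>v c"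
      proof (rule eq_vecI)
        fix j assume "j < dim_vec (0\<^sub>v c :: real vec)"
        hence j: "j < c" by simp
        have "(\<Sum>l<Suc k. G' $$ (l, j) * y $ l) = (\<Sum>l<k. G $$ (l, j) * y $ l)"
          using j by (simp add: G'_def)
        thus "(transpose_mat G *\<^sub>v y') $ j = 0\<^sub>v c $ j" using ye[of j] j G by (simp add: mv_sum scalar_prod_def atLeast0LessThan y'_def)
      qed (use G in simp)
      hence "y' = 0\<^sub>v k" using Ginj unfolding y'_def by simp
      show "y = 0\<^sub>v (Suc k)"
      proof (rule eq_vecI)
        fix l assume "l < dim_vec (0\<^sub>v (Suc k) :: real vec)"
        hence "l < Suc k" by simp
        thus "y $ l = 0\<^sub>v (Suc k) $ l" using yk \<open>y' = 0\<^sub>v k\<close>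
          by (auto simp: less_Suc_eq y'_def dest: arg_cong[of _ _ "\<lambda>v. v $ l"])
      qed (use y in simp)
    qed
    show ?thesis using F' G' eq injF injG by blast
  qed
qed


lemma factor:
  fixes A :: "real mat"
  assumes A: "A \<in> carrier_mat r c0"
  shows "\<exists>k F G. F \<in> carrier_mat r k \<and> G \<in> carrier_mat k c0 \<and> A = F * G \<and>
      (\<forall>v\<in>carrier_vec k. F *\<^sub>v v = 0\<^sub>v r \<longrightarrow> v = 0\<^sub>v k) \<and>
      (\<forall>v\<in>carrier_vec k. transpose_mat G *\<^sub>v v = 0\<^sub>v c0 \<longrightarrow> v = 0\<^sub>v k)"
proof -
  have "c \<le> c0 \<Longrightarrow> \<exists>k F G. F \<in> carrier_mat r k \<and> G \<in> carrier_mat k c \<and>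
      mat r c (\<lambda>(i,j). A $$ (i,j)) = F * G \<and>
      (\<forall>v\<in>carrier_vec k. F *\<^sub>v v = 0\<^sub>v r \<longrightarrow> v = 0\<^sub>v k) \<and>
      (\<forall>v\<in>carrier_vec k. transpose_mat G *\<^sub>v v = 0\<^sub>v c \<longrightarrow> v = 0\<^sub>v k)" for c
  proof (induction c)
    case 0
    have "mat r 0 (\<lambda>(i,j). A $$ (i,j)) = 0\<^sub>m r 0 * 0\<^sub>m 0 0" by (intro eq_matI) auto
    moreover have "\<forall>v\<in>carrier_vec 0. P v \<longrightarrow> v = 0\<^sub>v 0" for P using carrier_vec_0 by blast
    ultimately show ?case by (intro exI[of _ 0] exI[of _ "0\<^sub>m r 0"] exI[of _ "0\<^sub>m 0 0"]) auto
  next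
    case (Suc c)
    then obtain k F G where "F \<in> carrier_mat r k" "G \<in> carrier_mat k c"
      "mat r c (\<lambda>(i,j). A $$ (i,j)) = F * G"
      "\<forall>v\<in>carrier_vec k. F *\<^sub>v v = 0\<^sub>v r \<longrightarrow> v = 0\<^sub>v k"
      "\<forall>v\<in>carrier_vec k. transpose_mat G *\<^sub>v v = 0\<^sub>v c \<longrightarrow> v = 0\<^sub>v k" by auto
    from factor_step[OF A _ this] Suc.prems show ?case by simp
  qed
  from this[OF le_refl] show ?thesis
    by (metis (no_types, lifting) A case_prod_conv carrier_matD(1,2) eq_matI index_mat(1) dim_row_mat(1) dim_col_mat(1))
qed

lemma quad_inj:
  fixes F :: "real mat"
  assumes F: "F \<in> carrier_mat r k"
    and Finj: "\<forall>v\<in>carrier_vec k. F *\<^sub>v v = 0\<^sub>v r \<longrightarrow> v = 0\<^sub>v k"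
    and v: "v \<in> carrier_vec k" and z: "(transpose_mat F * F) *\<^sub>v v = 0\<^sub>v k"
  shows "v = 0\<^sub>v k"
proof -
  have "(transpose_mat F *\<^sub>v (F *\<^sub>v v)) \<bullet> v = 0" using z F v by simp
  hence "(F *\<^sub>v v) \<bullet> (F *\<^sub>v v) = 0" using transpose_vec_mult_scalar[OF F v, of "F *\<^sub>v v"] F v by simp
  hence "F *\<^sub>v v = 0\<^sub>v r" using sq_zero[of "F *\<^sub>v v"] F by simp
  thus ?thesis using Finj v by blast
qed

lemma pinv_exists:
  fixes A :: "real mat"
  shows "\<exists>B. penrose A B"
proof -
  obtain r c where A: "A \<in> carrier_mat r c" by blast
  obtain k F G where F: "F \<in> carrier_mat r k" and G: "G \<in> carrier_mat k c" and AFG: "A = F * G"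
    and Finj: "\<forall>v\<in>carrier_vec k. F *\<^sub>v v = 0\<^sub>v r \<longrightarrow> v = 0\<^sub>v k"
    and Ginj: "\<forall>v\<in>carrier_vec k. transpose_mat G *\<^sub>v v = 0\<^sub>v c \<longrightarrow> v = 0\<^sub>v k"
    using factor[OF A] by blast
  have GT: "transpose_mat G \<in> carrier_mat c k" using G by simp
  have K: "transpose_mat F * F \<in> carrier_mat k k" using F by simp
  have H: "transpose_mat (transpose_mat G) * transpose_mat G \<in> carrier_mat k k" using G by simp
  obtain Ki where Ki: "Ki \<in> carrier_mat k k" and K1: "transpose_mat F * F * Ki = 1\<^sub>m k"
    and K2: "Ki * (transpose_mat F * F) = 1\<^sub>m k"
    using inv_exists[OF K] quad_inj[OF F Finj] by blast
  obtain Hi where Hi: "Hi \<in> carrier_mat k k" and H1: "G * transpose_mat G * Hi = 1\<^sub>m k"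
    and H2: "Hi * (G * transpose_mat G) = 1\<^sub>m k"
    using inv_exists[OF H] quad_inj[OF GT Ginj] by auto
  have KiT: "transpose_mat Ki = Ki"
    by (rule inv_sym[OF K Ki _ K1 K2]) (use F in \<open>simp add: transpose_mult'\<close>)
  have HiT: "transpose_mat Hi = Hi"
    by (rule inv_sym[OF _ Hi _ H1 H2]) (use G in \<open>simp_all add: transpose_mult'\<close>)
  have r1: "Ki * (transpose_mat F * (F * X)) = X" if "dim_row X = k" for X
  proof -
    have "Ki * (transpose_mat F * (F * X)) = (Ki * (transpose_mat F * F)) * X" using F Ki that by simp
    thus ?thesis using K2 that by (metis carrier_matI left_mult_one_mat)
  qed
  have r2: "transpose_mat F * (F * (Ki * X)) = X" if "dim_row X = k" for X
  proof -
    have "transpose_mat F * (F * (Ki * X)) = (transpose_mat F * F * Ki) * X" using F Ki that by simp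
    thus ?thesis using K1 that by (metis carrier_matI left_mult_one_mat)
  qed
  have r3: "Hi * (G * (transpose_mat G * X)) = X" if "dim_row X = k" for X
  proof -
    have "Hi * (G * (transpose_mat G * X)) = (Hi * (G * transpose_mat G)) * X" using G Hi that by simp
    thus ?thesis using H2 that by (metis carrier_matI left_mult_one_mat)
  qed
  have r4: "G * (transpose_mat G * (Hi * X)) = X" if "dim_row X = k" for X
  proof -
    have "G * (transpose_mat G * (Hi * X)) = (G * transpose_mat G * Hi) * X" using G Hi that by simp
    thus ?thesis using H1 that by (metis carrier_matI left_mult_one_mat)
  qed
  define B where "B = transpose_mat G * Hi * Ki * transpose_mat F"
  have B: "B \<in> carrier_mat c r" unfolding B_def using F G Hi Ki by simp
  have AB: "A * B = F * (Ki * transpose_mat F)" unfolding AFG B_def using F G Hi Ki by (simp add: r4)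
  have BA: "B * A = transpose_mat G * (Hi * G)" unfolding AFG B_def using F G Hi Ki by (simp add: r1)
  have "penrose A B" unfolding penrose_def
  proof (intro conjI)
    show "B \<in> carrier_mat (dim_col A) (dim_row A)" using A B by simp
    show "A * B * A = A" unfolding AB unfolding AFG using F G Ki by (simp add: r1)
    show "B * A * B = B" unfolding BA unfolding B_def using F G Ki Hi by (simp add: r4)
    show "transpose_mat (A * B) = A * B" unfolding AB using F Ki
      by (simp add: transpose_mult' KiT)
    show "transpose_mat (B * A) = B * A" unfolding BA using G Hi
      by (simp add: transpose_mult' HiT)
  qed
  thus ?thesis by blast
qed

lemma pinv_penrose: "penrose A (pinv A)"
  using pinv_exists[of A] pinv_eq by metis


lemma inv_mat_eq:
  fixes M Mi :: "real mat"
  assumes M: "M \<in> carrier_mat k k" and Mi: "Mi \<in> carrier_mat k k"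
    and l: "M * Mi = 1\<^sub>m k" and r: "Mi * M = 1\<^sub>m k"
  shows "inv_mat M = Mi"
  unfolding inv_mat_def
proof (rule the_equality)
  show "Mi \<in> carrier_mat (dim_row M) (dim_row M) \<and> inverts_mat M Mi \<and> inverts_mat Mi M"
    using assms unfolding inverts_mat_def by simp
  fix B assume "B \<in> carrier_mat (dim_row M) (dim_row M) \<and> inverts_mat M B \<and> inverts_mat B M"
  hence B: "B \<in> carrier_mat k k" and BM: "B * M = 1\<^sub>m k" using M unfolding inverts_mat_def by auto
  have "B = B * (M * Mi)" using l B by simp
  also have "\<dots> = (B * M) * Mi" using B M Mi by simp
  also have "\<dots> = Mi" using BM Mi by simp
  finally show "B = Mi" .
qed

lemma mono_le:
  fixes f :: "nat \<Rightarrow> nat"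
  assumes "\<forall>k<K. f k \<le> f (Suc k)" "i \<le> j" "j \<le> K"
  shows "f i \<le> f j"
  using assms
proof (induction j)
  case 0 thus ?case by simp
next
  case (Suc j)
  thus ?case by (metis Suc_leD Suc_le_lessD le_Suc_eq le_trans)
qed

lemma block_exists:
  fixes f :: "nat \<Rightarrow> nat"
  assumes "\<forall>k<K. f k \<le> f (Suc k)" "f 0 = 0" "r < f K"
  shows "\<exists>k<K. f k \<le> r \<and> r < f (Suc k)"
  using assms
proof (induction K)
  case 0 thus ?case by simp
next
  case (Suc K)
  show ?case
  proof (cases "r < f K")
    case True
    with Suc.IH Suc.prems show ?thesis by (metis less_SucI)
  next
    case False
    thus ?thesis using Suc.prems by (intro exI[of _ K]) auto
  qed
qed

lemma card_ivl: "b \<le> n \<Longrightarrow> card {i. i < n \<and> i \<in> {a..<(b::nat)}} = b - a"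
proof -
  assume "b \<le> n"
  hence "{i. i < n \<and> i \<in> {a..<b}} = {a..<b}" by auto
  thus ?thesis by simp
qed

lemma pick_ivl: "i < b - a \<Longrightarrow> pick {a..<(b::nat)} i = a + i"
proof -
  assume i: "i < b - a"
  have "card {x\<in>{a..<b}. x < a + i} = i"
  proof -
    have "{x\<in>{a..<b}. x < a + i} = {a..<a+i}" using i by auto
    thus ?thesis by simp
  qed
  moreover have "a + i \<in> {a..<b}" using i by auto
  ultimately show ?thesis using pick_card_in_set[of "a+i" "{a..<b}"] by simp
qed

lemma sum_ivl_shift: "(\<Sum>r\<in>{a..<(b::nat)}. g r) = (\<Sum>l<b - a. g (a + l))"
proof (cases "a \<le> b")
  case True
  have "(\<Sum>r\<in>{a..<b}. g r) = (\<Sum>r\<in>{0+a..<(b-a)+a}. g r)" using True by simp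
  also have "\<dots> = (\<Sum>l\<in>{0..<b-a}. g (l + a))" by (rule sum.shift_bounds_nat_ivl)
  finally show ?thesis by (simp add: atLeast0LessThan add.commute)
qed simp

theorem mainTheorem2:
  fixes nb m n K :: nat
    and yb :: "real vec" and Xb Vb A :: "real mat"
    and ob ofs :: "nat \<Rightarrow> nat"
  assumes yb: "yb \<in> carrier_vec nb"
    and Xb: "Xb \<in> carrier_mat nb m"
    and Vb: "sym_pos_def nb Vb"
    and A: "A \<in> carrier_mat n nb"
    and A_rank: "full_col_rank A"
  defines "y \<equiv> A *\<^sub>v yb"
    and "X \<equiv> A * Xb"
    and "V \<equiv> A * Vb * transpose_mat A"
    and "Pb \<equiv> pinv (transpose_mat Xb * inv_mat Vb * Xb) * transpose_mat Xb * inv_mat Vb"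
    and "P \<equiv> pinv (transpose_mat (A * Xb) * pinv (A * Vb * transpose_mat A) * (A * Xb))
                * transpose_mat (A * Xb) * pinv (A * Vb * transpose_mat A)"
  shows "P * A = Pb
    \<and> (\<forall>i < m. row Pb i = transpose_mat A *\<^sub>v row P i \<and> row P i \<bullet> y = row Pb i \<bullet> yb)
    \<and> ((ob 0 = 0 \<and> ob K = nb \<and> (\<forall>k < K. ob k \<le> ob (Suc k))
        \<and> ofs 0 = 0 \<and> ofs K = n \<and> (\<forall>k < K. ofs k \<le> ofs (Suc k))
        \<and> (\<forall>k < K. \<forall>k' < K. k \<noteq> k' \<longrightarrow>
              (\<forall>j \<in> {ob k..<ob (Suc k)}. \<forall>l \<in> {ob k'..<ob (Suc k')}. Vb $$ (j, l) = 0))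
        \<and> (\<forall>k < K. \<forall>k' < K. k \<noteq> k' \<longrightarrow>
              (\<forall>j \<in> {ofs k..<ofs (Suc k)}. \<forall>l \<in> {ob k'..<ob (Suc k')}. A $$ (j, l) = 0))
        \<and> (\<forall>k < K. full_col_rank (submatrix A {ofs k..<ofs (Suc k)} {ob k..<ob (Suc k)})))
       \<longrightarrow> (\<forall>k < K. \<forall>i < m.
             (let Ak = submatrix A {ofs k..<ofs (Suc k)} {ob k..<ob (Suc k)};
                  pik = subvec (row P i) (ofs k) (ofs (Suc k));
                  pbik = subvec (row Pb i) (ob k) (ob (Suc k));
                  ybk = subvec yb (ob k) (ob (Suc k))
              in pbik = transpose_mat Ak *\<^sub>v pik \<and> pik \<bullet> (Ak *\<^sub>v ybk) = pbik \<bullet> ybk)))"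
proof -
  have Vb: "Vb \<in> carrier_mat nb nb" and VbT: "transpose_mat Vb = Vb"
    using Vb unfolding sym_pos_def_def by auto
  obtain Vi where Vi: "Vi \<in> carrier_mat nb nb" and V1: "Vb * Vi = 1\<^sub>m nb" and V2: "Vi * Vb = 1\<^sub>m nb"
    using inv_exists[OF Vb] spd_inj[OF \<open>sym_pos_def nb Vb\<close>] by blast
  have ViT: "transpose_mat Vi = Vi" using inv_sym[OF Vb Vi VbT V1 V2] .
  have invVb: "inv_mat Vb = Vi" using inv_mat_eq[OF Vb Vi V1 V2] .
  have Gm: "transpose_mat A * A \<in> carrier_mat nb nb" using A by simp
  obtain Gi where Gi: "Gi \<in> carrier_mat nb nb" and G1: "transpose_mat A * A * Gi = 1\<^sub>m nb"
    and G2: "Gi * (transpose_mat A * A) = 1\<^sub>m nb"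
    using inv_exists[OF Gm] quad_inj[OF A] fcr_inj[OF A A_rank] by blast
  have GiT: "transpose_mat Gi = Gi"
    by (rule inv_sym[OF Gm Gi _ G1 G2]) (use A in \<open>simp add: transpose_mult'\<close>)
  have r1: "Gi * (transpose_mat A * (A * Z)) = Z" if "dim_row Z = nb" for Z
  proof -
    have "Gi * (transpose_mat A * (A * Z)) = (Gi * (transpose_mat A * A)) * Z" using A Gi that by simp
    thus ?thesis using G2 that by (metis carrier_matI left_mult_one_mat)
  qed
  have r2: "transpose_mat A * (A * (Gi * Z)) = Z" if "dim_row Z = nb" for Z
  proof -
    have "transpose_mat A * (A * (Gi * Z)) = (transpose_mat A * A * Gi) * Z" using A Gi that by simp
    thus ?thesis using G1 that by (metis carrier_matI left_mult_one_mat)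
  qed
  have r3: "Vb * (Vi * Z) = Z" if "dim_row Z = nb" for Z
  proof -
    have "Vb * (Vi * Z) = (Vb * Vi) * Z" using Vb Vi that by simp
    thus ?thesis using V1 that by (metis carrier_matI left_mult_one_mat)
  qed
  have r4: "Vi * (Vb * Z) = Z" if "dim_row Z = nb" for Z
  proof -
    have "Vi * (Vb * Z) = (Vi * Vb) * Z" using Vb Vi that by simp
    thus ?thesis using V2 that by (metis carrier_matI left_mult_one_mat)
  qed
  have r5: "Gi * (transpose_mat A * A) = 1\<^sub>m nb" using G2 .
  have r6: "Vi * 1\<^sub>m nb = Vi" using Vi by simp
  define W where "W = A * Gi * Vi * Gi * transpose_mat A"
  have Wc: "W \<in> carrier_mat n n" unfolding W_def using A Gi Vi by simp
  have VW: "A * Vb * transpose_mat A * W = A * (Gi * transpose_mat A)"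
    unfolding W_def using A Gi Vi Vb by (simp add: r1 r2 r3 r4)
  have WV: "W * (A * Vb * transpose_mat A) = A * (Gi * transpose_mat A)"
    unfolding W_def using A Gi Vi Vb by (simp add: r1 r2 r3 r4)
  have symH: "transpose_mat (A * (Gi * transpose_mat A)) = A * (Gi * transpose_mat A)"
    using A Gi by (simp add: transpose_mult' GiT)
  have "penrose (A * Vb * transpose_mat A) W" unfolding penrose_def
  proof (intro conjI)
    show "W \<in> carrier_mat (dim_col (A * Vb * transpose_mat A)) (dim_row (A * Vb * transpose_mat A))"
      using Wc A by simp
    show "A * Vb * transpose_mat A * W * (A * Vb * transpose_mat A) = A * Vb * transpose_mat A"
      unfolding VW using A Gi Vb by (simp add: r1 r2)
    show "W * (A * Vb * transpose_mat A) * W = W"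
      unfolding WV unfolding W_def using A Gi Vb Vi by (simp add: r1 r2)
    show "transpose_mat (A * Vb * transpose_mat A * W) = A * Vb * transpose_mat A * W"
      unfolding VW by (rule symH)
    show "transpose_mat (W * (A * Vb * transpose_mat A)) = W * (A * Vb * transpose_mat A)"
      unfolding WV by (rule symH)
  qed
  hence pinvV: "pinv (A * Vb * transpose_mat A) = W" by (rule pinv_eq)
  have Meq: "transpose_mat (A * Xb) * pinv (A * Vb * transpose_mat A) * (A * Xb)
      = transpose_mat Xb * inv_mat Vb * Xb"
    unfolding pinvV invVb W_def using A Gi Vi Xb by (simp add: transpose_mult' r1 r2)
  define Q where "Q = pinv (transpose_mat Xb * inv_mat Vb * Xb)"
  have Qc: "Q \<in> carrier_mat m m"
    using pinv_penrose[of "transpose_mat Xb * inv_mat Vb * Xb"] Xb Vi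
    unfolding Q_def penrose_def invVb by simp
  have P: "P = Q * transpose_mat (A * Xb) * W"
  proof -
    have "P = pinv (transpose_mat Xb * inv_mat Vb * Xb) * transpose_mat (A * Xb) * pinv (A * Vb * transpose_mat A)"
      unfolding P_def by (simp only: Meq)
    thus ?thesis unfolding Q_def pinvV .
  qed
  have Pc: "P \<in> carrier_mat m n" unfolding P
  proof (rule mult_carrier_mat[OF mult_carrier_mat[OF Qc] Wc])
    show "transpose_mat (A * Xb) \<in> carrier_mat m n" using A Xb by simp
  qed
  have Pb: "Pb = Q * transpose_mat Xb * Vi" unfolding Pb_def Q_def invVb ..
  have PA: "P * A = Pb"
    unfolding P Pb W_def using A Gi Vi Xb Qc by (simp add: transpose_mult' r1 r2 r5 r6)
  have rowPb: "row Pb i = transpose_mat A *\<^sub>v row P i" if i: "i < m" for i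
  proof (rule eq_vecI)
    show "dim_vec (row Pb i) = dim_vec (transpose_mat A *\<^sub>v row P i)"
      unfolding PA[symmetric] using A Pc by simp
    fix j assume "j < dim_vec (transpose_mat A *\<^sub>v row P i)"
    hence j: "j < nb" using A by simp
    have "row Pb i $ j = row P i \<bullet> col A j" unfolding PA[symmetric] using i j A Pc by simp
    also have "\<dots> = col A j \<bullet> row P i"
      by (rule comm_scalar_prod[of _ n]) (use A Pc i in auto)
    finally show "row Pb i $ j = (transpose_mat A *\<^sub>v row P i) $ j" using j A by simp
  qed
  have part2: "row Pb i = transpose_mat A *\<^sub>v row P i \<and> row P i \<bullet> y = row Pb i \<bullet> yb" if i: "i < m" for i
  proof
    show "row Pb i = transpose_mat A *\<^sub>v row P i" using rowPb[OF i] .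
    have "row Pb i \<bullet> yb = row P i \<bullet> (A *\<^sub>v yb)" unfolding rowPb[OF i]
      by (rule transpose_vec_mult_scalar[OF A yb]) (use Pc i in auto)
    thus "row P i \<bullet> y = row Pb i \<bullet> yb" unfolding y_def by simp
  qed
  show ?thesis
    apply (intro conjI)
      apply (rule PA)
     using part2 apply blast
  proof (intro impI allI)
    fix k i
    assume H: "ob 0 = 0 \<and> ob K = nb \<and> (\<forall>k < K. ob k \<le> ob (Suc k))
        \<and> ofs 0 = 0 \<and> ofs K = n \<and> (\<forall>k < K. ofs k \<le> ofs (Suc k))
        \<and> (\<forall>k < K. \<forall>k' < K. k \<noteq> k' \<longrightarrow>
              (\<forall>j \<in> {ob k..<ob (Suc k)}. \<forall>l \<in> {ob k'..<ob (Suc k')}. Vb $$ (j, l) = 0))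
        \<and> (\<forall>k < K. \<forall>k' < K. k \<noteq> k' \<longrightarrow>
              (\<forall>j \<in> {ofs k..<ofs (Suc k)}. \<forall>l \<in> {ob k'..<ob (Suc k')}. A $$ (j, l) = 0))
        \<and> (\<forall>k < K. full_col_rank (submatrix A {ofs k..<ofs (Suc k)} {ob k..<ob (Suc k)}))"
      and k: "k < K" and i: "i < m"
    define a where "a = ofs k"
    define b where "b = ofs (Suc k)"
    define a' where "a' = ob k"
    define b' where "b' = ob (Suc k)"
    have ab: "a \<le> b" "b \<le> n" using H k mono_le[of K ofs k "Suc k"] mono_le[of K ofs "Suc k" K]
      unfolding a_def b_def by auto
    have ab': "a' \<le> b'" "b' \<le> nb" using H k mono_le[of K ob k "Suc k"] mono_le[of K ob "Suc k" K]
      unfolding a'_def b'_def by auto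
    define Ak where "Ak = submatrix A {a..<b} {a'..<b'}"
    define pik where "pik = subvec (row P i) a b"
    define pbik where "pbik = subvec (row Pb i) a' b'"
    define ybk where "ybk = subvec yb a' b'"
    have c1: "card {i. i < dim_row A \<and> i \<in> {a..<b}} = b - a"
      using card_ivl[of b n a] A ab by simp
    have c2: "card {i. i < dim_col A \<and> i \<in> {a'..<b'}} = b' - a'"
      using card_ivl[of b' nb a'] A ab' by simp
    have Akc: "Ak \<in> carrier_mat (b - a) (b' - a')"
      unfolding Ak_def submatrix_def c1 c2 by simp
    have Ake: "Ak $$ (l, j) = A $$ (a + l, a' + j)" if "l < b - a" "j < b' - a'" for l j
      unfolding Ak_def using that submatrix_index[of l A "{a..<b}" j "{a'..<b'}"] c1 c2
      by (simp add: pick_ivl)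
    have pikc: "pik \<in> carrier_vec (b - a)" unfolding pik_def subvec_def by simp
    have ybkc: "ybk \<in> carrier_vec (b' - a')" unfolding ybk_def subvec_def by simp
    have zero: "A $$ (r, a' + j) = 0" if r: "r < n" "r \<notin> {a..<b}" and j: "j < b' - a'" for r j
    proof -
      obtain k' where k': "k' < K" "ofs k' \<le> r" "r < ofs (Suc k')"
        using block_exists[of K ofs r] H r by auto
      have "k' \<noteq> k" using k' r unfolding a_def b_def by auto
      thus ?thesis using H k k' j unfolding a'_def b'_def by auto
    qed
    have e1: "pbik = transpose_mat Ak *\<^sub>v pik"
    proof (rule eq_vecI)
      show "dim_vec pbik = dim_vec (transpose_mat Ak *\<^sub>v pik)"
        unfolding pbik_def subvec_def using Akc by simp
      fix j assume "j < dim_vec (transpose_mat Ak *\<^sub>v pik)"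
      hence j: "j < b' - a'" using Akc by simp
      have "pbik $ j = (P * A) $$ (i, a' + j)" unfolding pbik_def subvec_def PA[symmetric]
        using j ab' Pc A i by simp
      also have "\<dots> = (\<Sum>r<n. P $$ (i, r) * A $$ (r, a' + j))"
        using j ab' Pc A i by (simp add: scalar_prod_def atLeast0LessThan)
      also have "\<dots> = (\<Sum>r\<in>{a..<b}. P $$ (i, r) * A $$ (r, a' + j))"
        using zero[OF _ _ j] ab by (intro sum.mono_neutral_right) auto
      also have "\<dots> = (\<Sum>l<b - a. P $$ (i, a + l) * A $$ (a + l, a' + j))"
        by (rule sum_ivl_shift)
      also have "\<dots> = (\<Sum>l<b - a. Ak $$ (l, j) * pik $ l)"
        using j Akc ab Pc i by (intro sum.cong) (auto simp: Ake pik_def subvec_def mult.commute)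
      also have "\<dots> = (transpose_mat Ak *\<^sub>v pik) $ j"
        using j Akc pikc by (simp add: scalar_prod_def atLeast0LessThan)
      finally show "pbik $ j = (transpose_mat Ak *\<^sub>v pik) $ j" .
    qed
    have e2: "pik \<bullet> (Ak *\<^sub>v ybk) = pbik \<bullet> ybk"
      unfolding e1 by (rule transpose_vec_mult_scalar[OF Akc ybkc pikc, symmetric])
    show "let Ak = submatrix A {ofs k..<ofs (Suc k)} {ob k..<ob (Suc k)};
                  pik = subvec (row P i) (ofs k) (ofs (Suc k));
                  pbik = subvec (row Pb i) (ob k) (ob (Suc k));
                  ybk = subvec yb (ob k) (ob (Suc k))
              in pbik = transpose_mat Ak *\<^sub>v pik \<and> pik \<bullet> (Ak *\<^sub>v ybk) = pbik \<bullet> ybk"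
      using e1 e2 unfolding Let_def Ak_def pik_def pbik_def ybk_def a_def b_def a'_def b'_def by simp
  qed
qed

end
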